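(* Let $\rho\colon\mathrm{Isom}(\mathbf H^1_{\mathbb C})_o\to\mathrm{Isom}(\mathbf H^\infty_{\mathbb C})_o$ be a non-elementary representation with $\ell(\rho)=t$. Then for every $\lambda>0$ and all $b,d\in\mathbb R$: (1) $K(\lambda b)=\lambda^tK(b)$; (2) $K(-b)=\overline{K(b)}$; (3) $K(b+d)=K(b)+K(d)+\langle c(d),c(-b)\rangle$.
   Context: $\mathcal H$: separable complex Hilbert space with strongly non-degenerate Hermitian form $B$ (linear in first variable) of signature $(1,\infty)$; $\mathbf H^\infty_{\mathbb C}=\{[v]:B(v,v)>0\}$, $\cosh d([v],[w])=|B(v,w)|/\sqrt{B(v,v)B(w,w)}$, boundary = isotropic lines, $\mathrm{Isom}(\mathbf H^\infty_{\mathbb C})_o=PU(B)$. $\mathbf H^1_{\mathbb C}$: $\mathbb C^2$ with $B(z,w)=z_1\bar w_1-z_2\bar w_2$, $\xi_{1,2}=(e_1\pm e_2)/\sqrt2$; $g(\lambda,b)\in SU(1,1)$ has matrix $\begin{pmatrix}\lambda&ib\\0&\lambda^{-1}\end{pmatrix}$ in basis $(\xi_1,\xi_2)$. Representations are orbitally continuous; non-elementary = no fixed point in $\mathbf H^\infty_{\mathbb C}\cup\partial\mathbf H^\infty_{\mathbb C}$ and no invariant pair of boundary points. For such $\rho$: $\eta_1$ = unique common fixed boundary point of the $\rho(g(\lambda,b))$, $\eta_2$ = other endpoint of the common axis of the hyperbolic $\rho(g(\lambda,0))$, $\lambda\ne1$; isotropic representatives with $B(\eta_1,\eta_2)=1$;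 $E=\eta_1^\perp\cap\eta_2^\perp$, $\langle u,v\rangle:=B(u,v)$ on $E$. The lift $T_b\in U(B)$ of $\rho(g(1,b))$ with $T_b\eta_1=\eta_1$ satisfies $T_b\eta_2=K(b)\eta_1+\eta_2+c(b)$, $K(b)\in\mathbb C$, $c(b)\in E$. $\ell(\rho)$ is the $t>0$ with $\inf_xd(\rho(g(\lambda,0))x,x)=t|\ln\lambda|$ for all $\lambda>0$. *)

theory Defs
  imports "HOL-Analysis.Analysis"
begin

text \<open>Concrete model of the separable complex Hilbert space with a strongly
non-degenerate Hermitian form of signature (1,infinity): square-summable
sequences v :: nat => complex, where coordinate 0 spans the positive line and
the remaining coordinates form l^2 with the negative of the standard inner product.\<close>

type_synonym hvec = "nat \<Rightarrow> complex"

definition Hsp :: "hvec set" where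
  "Hsp = {v. summable (\<lambda>n. (cmod (v n))^2)}"

definition Bf :: "hvec \<Rightarrow> hvec \<Rightarrow> complex" where
  "Bf v w = v 0 * cnj (w 0) - (\<Sum>n. v (Suc n) * cnj (w (Suc n)))"

definition sc :: "complex \<Rightarrow> hvec \<Rightarrow> hvec" where
  "sc a v = (\<lambda>n. a * v n)"

definition vadd :: "hvec \<Rightarrow> hvec \<Rightarrow> hvec" where
  "vadd u v = (\<lambda>n. u n + v n)"

definition zvec :: hvec where
  "zvec = (\<lambda>n. 0)"

definition UB :: "(hvec \<Rightarrow> hvec) set" where
  "UB = {T. bij_betw T Hsp Hsp
          \<and> (\<forall>u\<in>Hsp. \<forall>v\<in>Hsp. \<forall>a. T (vadd (sc a u) v) = vadd (sc a (T u)) (T v))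
          \<and> (\<forall>u\<in>Hsp. \<forall>v\<in>Hsp. Bf (T u) (T v) = Bf u v)}"

definition cline :: "hvec \<Rightarrow> hvec set" where
  "cline v = {w. \<exists>a. w = sc a v}"

definition hyp_pts :: "hvec set set" where
  "hyp_pts = {cline v | v. v \<in> Hsp \<and> Re (Bf v v) > 0}"

definition bd_pts :: "hvec set set" where
  "bd_pts = {cline v | v. v \<in> Hsp \<and> v \<noteq> zvec \<and> Bf v v = 0}"

definition rep :: "hvec set \<Rightarrow> hvec" where
  "rep x = (SOME v. v \<in> x \<and> v \<noteq> zvec)"

definition hdist :: "hvec set \<Rightarrow> hvec set \<Rightarrow> real" where
  "hdist x y = arcosh (cmod (Bf (rep x) (rep y))
                 / sqrt (Re (Bf (rep x) (rep x)) * Re (Bf (rep y) (rep y))))"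

text \<open>An element of PU(B) is represented by its action on the hyperbolic space;
T is a lift of f if it induces f.\<close>
definition induces :: "(hvec \<Rightarrow> hvec) \<Rightarrow> (hvec set \<Rightarrow> hvec set) \<Rightarrow> bool" where
  "induces T f \<longleftrightarrow> (\<forall>x\<in>hyp_pts. f x = T ` x)"

definition in_PU :: "(hvec set \<Rightarrow> hvec set) \<Rightarrow> bool" where
  "in_PU f \<longleftrightarrow> (\<exists>T\<in>UB. induces T f)"

definition fixes_bd :: "(hvec set \<Rightarrow> hvec set) \<Rightarrow> hvec set \<Rightarrow> bool" where
  "fixes_bd f xi \<longleftrightarrow> (\<exists>T\<in>UB. induces T f \<and> T ` xi = xi)"

definition B2 :: "complex^2 \<Rightarrow> complex^2 \<Rightarrow> complex" where
  "B2 z w = z$1 * cnj (w$1) - z$2 * cnj (w$2)"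

definition SU11 :: "(complex^2^2) set" where
  "SU11 = {A. det A = 1 \<and> (\<forall>z w. B2 (A *v z) (A *v w) = B2 z w)}"

text \<open>Basis change matrix with columns xi1 = (e1+e2)/sqrt 2, xi2 = (e1-e2)/sqrt 2.\<close>
definition Pxi :: "complex^2^2" where
  "Pxi = (\<chi> i j. if i = 2 \<and> j = 2 then - of_real (1 / sqrt 2) else of_real (1 / sqrt 2))"

text \<open>g(lambda,b) has matrix [[lambda, i b],[0, 1/lambda]] in the basis (xi1, xi2).\<close>
definition Mlb :: "real \<Rightarrow> real \<Rightarrow> complex^2^2" where
  "Mlb l b = (\<chi> i j. if i = 1 \<and> j = 1 then of_real l
                      else if i = 1 \<and> j = 2 then \<i> * of_real b
                      else if i = 2 \<and> j = 2 then of_real (1 / l) else 0)"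

definition gmat :: "real \<Rightarrow> real \<Rightarrow> complex^2^2" where
  "gmat l b = Pxi ** Mlb l b ** matrix_inv Pxi"

text \<open>Representations Isom(H^1_C)_o = PSU(1,1) -> PU(B), given as maps on SU(1,1)
that are trivial on -1, multiplicative, and orbitally continuous.\<close>
definition is_rep :: "(complex^2^2 \<Rightarrow> hvec set \<Rightarrow> hvec set) \<Rightarrow> bool" where
  "is_rep \<rho> \<longleftrightarrow>
     (\<forall>g\<in>SU11. in_PU (\<rho> g))
   \<and> (\<forall>g\<in>SU11. \<forall>h\<in>SU11. \<forall>x\<in>hyp_pts. \<rho> (g ** h) x = \<rho> g (\<rho> h x))
   \<and> (\<forall>x\<in>hyp_pts. \<rho> (- mat 1) x = x)
   \<and> (\<forall>x\<in>hyp_pts. \<forall>g\<in>SU11. \<forall>e>0. \<exists>d>0. \<forall>h\<in>SU11.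
          norm (h - g) < d \<longrightarrow> hdist (\<rho> h x) (\<rho> g x) < e)"

definition non_elementary :: "(complex^2^2 \<Rightarrow> hvec set \<Rightarrow> hvec set) \<Rightarrow> bool" where
  "non_elementary \<rho> \<longleftrightarrow>
     \<not> (\<exists>x\<in>hyp_pts. \<forall>g\<in>SU11. \<rho> g x = x)
   \<and> \<not> (\<exists>xi\<in>bd_pts. \<forall>g\<in>SU11. fixes_bd (\<rho> g) xi)
   \<and> \<not> (\<exists>xi1\<in>bd_pts. \<exists>xi2\<in>bd_pts. xi1 \<noteq> xi2 \<and>
          (\<forall>g\<in>SU11. \<exists>T\<in>UB. induces T (\<rho> g) \<and> (\<lambda>xi. T ` xi) ` {xi1, xi2} = {xi1, xi2}))"

definition displ :: "(hvec set \<Rightarrow> hvec set) \<Rightarrow> real" where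
  "displ f = (INF x\<in>hyp_pts. hdist (f x) x)"

definition ell_is :: "(complex^2^2 \<Rightarrow> hvec set \<Rightarrow> hvec set) \<Rightarrow> real \<Rightarrow> bool" where
  "ell_is \<rho> t \<longleftrightarrow> t > 0 \<and> (\<forall>l>0. displ (\<rho> (gmat l 0)) = t * \<bar>ln l\<bar>)"

text \<open>Real geodesic with endpoints [e1], [e2] (isotropic, B(e1,e2) = 1).\<close>
definition geod :: "hvec \<Rightarrow> hvec \<Rightarrow> hvec set set" where
  "geod e1 e2 = {cline (vadd (sc (of_real a) e1) e2) | a. a > 0}"

definition is_axis :: "hvec set set \<Rightarrow> (hvec set \<Rightarrow> hvec set) \<Rightarrow> bool" where
  "is_axis G f \<longleftrightarrow> displ f > 0 \<and> f ` G = G \<and> (\<forall>x\<in>G. hdist (f x) x = displ f)"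

definition Eperp :: "hvec \<Rightarrow> hvec \<Rightarrow> hvec set" where
  "Eperp e1 e2 = {v\<in>Hsp. Bf v e1 = 0 \<and> Bf v e2 = 0}"

end

theory Submission
  imports Defs
begin



lemma Hsp_iff: "v \<in> Hsp \<longleftrightarrow> summable (\<lambda>n. (cmod (v n))^2)"
  by (simp add: Hsp_def)

lemma sq_sum_shift: "v \<in> Hsp \<Longrightarrow> summable (\<lambda>n. (cmod (v (Suc n)))^2)"
  unfolding Hsp_iff by (subst summable_Suc_iff)

lemma prod_summable:
  assumes "u \<in> Hsp" "w \<in> Hsp"
  shows "summable (\<lambda>n. u (Suc n) * cnj (w (Suc n)))"
proof (rule summable_comparison_test')
  show "summable (\<lambda>n. ((cmod (u (Suc n)))^2 + (cmod (w (Suc n)))^2) / 2)"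
    using sq_sum_shift[OF assms(1)] sq_sum_shift[OF assms(2)]
    by (intro summable_divide summable_add)
  fix n
  have "2 * (cmod (u (Suc n)) * cmod (w (Suc n))) \<le> (cmod (u (Suc n)))^2 + (cmod (w (Suc n)))^2"
    using sum_squares_bound[of "cmod (u (Suc n))" "cmod (w (Suc n))"] by simp
  then show "norm (u (Suc n) * cnj (w (Suc n))) \<le> ((cmod (u (Suc n)))^2 + (cmod (w (Suc n)))^2) / 2"
    by (simp add: norm_mult)
qed

lemma zvec_H: "zvec \<in> Hsp" by (simp add: Hsp_def zvec_def)

lemma vadd_H: assumes "u \<in> Hsp" "v \<in> Hsp" shows "vadd u v \<in> Hsp"
  unfolding Hsp_iff vadd_def
proof (rule summable_comparison_test')
  show "summable (\<lambda>n. 2 * (cmod (u n))^2 + 2 * (cmod (v n))^2)"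
    using assms unfolding Hsp_iff by (intro summable_add summable_mult)
  fix n
  have "cmod (u n + v n) \<le> cmod (u n) + cmod (v n)" by (rule norm_triangle_ineq)
  hence "(cmod (u n + v n))^2 \<le> (cmod (u n) + cmod (v n))^2"
    by (simp add: power_mono)
  also have "\<dots> \<le> 2 * (cmod (u n))^2 + 2 * (cmod (v n))^2"
    using sum_squares_bound[of "cmod (u n)" "cmod (v n)"] by (simp add: power2_sum)
  finally show "norm ((cmod (u n + v n))^2) \<le> 2 * (cmod (u n))^2 + 2 * (cmod (v n))^2" by simp
qed

lemma sc_H: assumes "u \<in> Hsp" shows "sc a u \<in> Hsp"
proof -
  have "summable (\<lambda>n. (cmod a)^2 * (cmod (u n))^2)"
    using assms unfolding Hsp_iff by (intro summable_mult)
  then show ?thesis unfolding Hsp_iff sc_def by (simp add: norm_mult power_mult_distrib)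
qed

lemma Bf_add_left:
  assumes "u \<in> Hsp" "v \<in> Hsp" "w \<in> Hsp"
  shows "Bf (vadd u v) w = Bf u w + Bf v w"
proof -
  have "(\<Sum>n. (u (Suc n) + v (Suc n)) * cnj (w (Suc n))) =
        (\<Sum>n. u (Suc n) * cnj (w (Suc n))) + (\<Sum>n. v (Suc n) * cnj (w (Suc n)))"
    using suminf_add[OF prod_summable[OF assms(1,3)] prod_summable[OF assms(2,3)]]
    by (simp add: distrib_right)
  then show ?thesis unfolding Bf_def vadd_def by (simp add: algebra_simps)
qed

lemma Bf_sc_left:
  assumes "u \<in> Hsp" "w \<in> Hsp"
  shows "Bf (sc a u) w = a * Bf u w"
proof -
  have "(\<Sum>n. a * u (Suc n) * cnj (w (Suc n))) = a * (\<Sum>n. u (Suc n) * cnj (w (Suc n)))"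
    using prod_summable[OF assms] by (subst suminf_mult[symmetric]) (auto simp: algebra_simps)
  then show ?thesis unfolding Bf_def sc_def by (simp add: algebra_simps)
qed

lemma Bf_cnj:
  assumes "u \<in> Hsp" "w \<in> Hsp"
  shows "Bf w u = cnj (Bf u w)"
proof -
  have s: "(\<lambda>n. u (Suc n) * cnj (w (Suc n))) sums (\<Sum>n. u (Suc n) * cnj (w (Suc n)))"
    using prod_summable[OF assms] by (rule summable_sums)
  have "(\<lambda>n. cnj (u (Suc n) * cnj (w (Suc n)))) sums cnj (\<Sum>n. u (Suc n) * cnj (w (Suc n)))"
    using s by (subst sums_cnj)
  hence "(\<lambda>n. w (Suc n) * cnj (u (Suc n))) sums cnj (\<Sum>n. u (Suc n) * cnj (w (Suc n)))"
    by (simp add: mult.commute)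
  hence "(\<Sum>n. w (Suc n) * cnj (u (Suc n))) = cnj (\<Sum>n. u (Suc n) * cnj (w (Suc n)))"
    by (rule sums_unique[symmetric])
  then show ?thesis unfolding Bf_def by (simp add: mult.commute)
qed

lemma Bf_add_right:
  assumes "u \<in> Hsp" "v \<in> Hsp" "w \<in> Hsp"
  shows "Bf w (vadd u v) = Bf w u + Bf w v"
  using Bf_cnj[OF vadd_H[OF assms(1,2)] assms(3)] Bf_add_left[OF assms] Bf_cnj[OF assms(1,3)] Bf_cnj[OF assms(2,3)]
  by simp

lemma Bf_sc_right:
  assumes "u \<in> Hsp" "w \<in> Hsp"
  shows "Bf w (sc a u) = cnj a * Bf w u"
  using Bf_cnj[OF sc_H[OF assms(1)] assms(2), of a] Bf_sc_left[OF assms, of a] Bf_cnj[OF assms]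
  by simp

lemma Bf_zvec_left: "Bf zvec w = 0" by (simp add: Bf_def zvec_def)
lemma Bf_zvec_right: "Bf w zvec = 0" by (simp add: Bf_def zvec_def)

lemma Re_Bf_self_le:
  assumes "w \<in> Hsp" "w 0 = 0"
  shows "Re (Bf w w) \<le> 0"
proof -
  have s: "summable (\<lambda>n. w (Suc n) * cnj (w (Suc n)))" using prod_summable[OF assms(1) assms(1)] .
  have ss: "(\<lambda>n. Re (w (Suc n) * cnj (w (Suc n)))) sums Re (\<Sum>n. w (Suc n) * cnj (w (Suc n)))"
    using sums_Re[OF summable_sums[OF s]] .
  have nn: "\<And>n. Re (w (Suc n) * cnj (w (Suc n))) \<ge> 0"
    by (simp add: complex_mult_cnj)
  have "Re (\<Sum>n. w (Suc n) * cnj (w (Suc n))) = (\<Sum>n. Re (w (Suc n) * cnj (w (Suc n))))"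
    using ss by (rule sums_unique)
  also have "\<dots> \<ge> 0" by (rule suminf_nonneg[OF sums_summable[OF ss] nn])
  finally have "Re (\<Sum>n. w (Suc n) * cnj (w (Suc n))) \<ge> 0" .
  then show ?thesis unfolding Bf_def using assms(2) by simp
qed




lemma vadd_zvec: "vadd x zvec = x" by (simp add: vadd_def zvec_def)
lemma sc_one: "sc 1 x = x" by (simp add: sc_def)

lemma UB_H: "T \<in> UB \<Longrightarrow> u \<in> Hsp \<Longrightarrow> T u \<in> Hsp"
  unfolding UB_def bij_betw_def by auto

lemma UB_inj: "T \<in> UB \<Longrightarrow> inj_on T Hsp"
  unfolding UB_def bij_betw_def by auto

lemma UB_surj: "T \<in> UB \<Longrightarrow> T ` Hsp = Hsp"
  unfolding UB_def bij_betw_def by auto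

lemma UB_B: "T \<in> UB \<Longrightarrow> u \<in> Hsp \<Longrightarrow> v \<in> Hsp \<Longrightarrow> Bf (T u) (T v) = Bf u v"
  unfolding UB_def by auto

lemma UB_lin: "T \<in> UB \<Longrightarrow> u \<in> Hsp \<Longrightarrow> v \<in> Hsp \<Longrightarrow> T (vadd (sc a u) v) = vadd (sc a (T u)) (T v)"
  unfolding UB_def by auto

lemma UB_zvec: assumes "T \<in> UB" shows "T zvec = zvec"
proof -
  have "T (vadd (sc 1 zvec) zvec) = vadd (sc 1 (T zvec)) (T zvec)"
    using UB_lin[OF assms zvec_H zvec_H] .
  hence "T zvec = vadd (T zvec) (T zvec)" by (simp add: sc_one vadd_zvec)
  hence "\<And>n. T zvec n = T zvec n + T zvec n" by (metis vadd_def)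
  thus ?thesis by (auto simp: zvec_def fun_eq_iff)
qed

lemma UB_sc: assumes "T \<in> UB" "u \<in> Hsp" shows "T (sc a u) = sc a (T u)"
  using UB_lin[OF assms zvec_H, of a] UB_zvec[OF assms(1)] by (simp add: vadd_zvec)

lemma UB_add: assumes "T \<in> UB" "u \<in> Hsp" "v \<in> Hsp" shows "T (vadd u v) = vadd (T u) (T v)"
  using UB_lin[OF assms, of 1] by (simp add: sc_one)

lemma UB_comp: assumes "T \<in> UB" "S \<in> UB" shows "(T \<circ> S) \<in> UB"
proof -
  have "bij_betw (T \<circ> S) Hsp Hsp"
    using assms unfolding UB_def by (auto intro: bij_betw_trans)
  moreover have "\<forall>u\<in>Hsp. \<forall>v\<in>Hsp. \<forall>a. (T \<circ> S) (vadd (sc a u) v) = vadd (sc a ((T \<circ> S) u)) ((T \<circ> S) v)"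
  proof (intro ballI allI)
    fix u v a assume uv: "u \<in> Hsp" "v \<in> Hsp"
    have "S (vadd (sc a u) v) = vadd (sc a (S u)) (S v)" by (rule UB_lin[OF assms(2) uv])
    moreover have "T (vadd (sc a (S u)) (S v)) = vadd (sc a (T (S u))) (T (S v))"
      by (rule UB_lin[OF assms(1) UB_H[OF assms(2) uv(1)] UB_H[OF assms(2) uv(2)]])
    ultimately show "(T \<circ> S) (vadd (sc a u) v) = vadd (sc a ((T \<circ> S) u)) ((T \<circ> S) v)" by simp
  qed
  moreover have "\<forall>u\<in>Hsp. \<forall>v\<in>Hsp. Bf ((T \<circ> S) u) ((T \<circ> S) v) = Bf u v"
  proof (intro ballI)
    fix u v assume uv: "u \<in> Hsp" "v \<in> Hsp"
    have "Bf (T (S u)) (T (S v)) = Bf (S u) (S v)"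
      by (rule UB_B[OF assms(1) UB_H[OF assms(2) uv(1)] UB_H[OF assms(2) uv(2)]])
    also have "\<dots> = Bf u v" by (rule UB_B[OF assms(2) uv])
    finally show "Bf ((T \<circ> S) u) ((T \<circ> S) v) = Bf u v" by simp
  qed
  ultimately show ?thesis unfolding UB_def by blast
qed

lemma cline_img: assumes "T \<in> UB" "v \<in> Hsp" shows "T ` cline v = cline (T v)"
proof
  show "T ` cline v \<subseteq> cline (T v)" unfolding cline_def using UB_sc[OF assms] by auto
  show "cline (T v) \<subseteq> T ` cline v"
  proof
    fix x assume "x \<in> cline (T v)"
    then obtain a where "x = sc a (T v)" unfolding cline_def by auto
    hence "x = T (sc a v)" using UB_sc[OF assms] by simp
    moreover have "sc a v \<in> cline v" unfolding cline_def by auto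
    ultimately show "x \<in> T ` cline v" by blast
  qed
qed

lemma self_in_cline: "v \<in> cline v"
  unfolding cline_def by (rule CollectI, rule exI[of _ 1], simp add: sc_one)

lemma cline_eqD: "cline w = cline v \<Longrightarrow> \<exists>s. w = sc s v"
  using self_in_cline[of w] unfolding cline_def by auto

lemma sc_sc: "sc a (sc b v) = sc (a * b) v" by (simp add: sc_def mult.assoc)

lemma sc_zvec_iff: "sc a v = zvec \<longleftrightarrow> a = 0 \<or> v = zvec"
  by (auto simp: sc_def zvec_def fun_eq_iff)

lemma sc_cancel: assumes "sc a v = sc b v" "v \<noteq> zvec" shows "a = b"
proof -
  obtain n where "v n \<noteq> 0" using assms(2) by (auto simp: zvec_def fun_eq_iff)
  moreover have "a * v n = b * v n" using assms(1) by (metis sc_def)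
  ultimately show ?thesis by simp
qed

lemma hyp_ptsI: "v \<in> Hsp \<Longrightarrow> Re (Bf v v) > 0 \<Longrightarrow> cline v \<in> hyp_pts"
  unfolding hyp_pts_def by auto

lemma hyp_pts_E: "x \<in> hyp_pts \<Longrightarrow> \<exists>v. x = cline v \<and> v \<in> Hsp \<and> Re (Bf v v) > 0"
  unfolding hyp_pts_def by auto

lemma rep_cline:
  assumes "v \<noteq> zvec"
  shows "\<exists>s. s \<noteq> 0 \<and> rep (cline v) = sc s v"
proof -
  have "\<exists>w. w \<in> cline v \<and> w \<noteq> zvec" using self_in_cline[of v] assms by blast
  hence "rep (cline v) \<in> cline v \<and> rep (cline v) \<noteq> zvec"
    unfolding rep_def by (rule someI_ex)
  then obtain s where "rep (cline v) = sc s v" "sc s v \<noteq> zvec" unfolding cline_def by auto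
  thus ?thesis by (auto simp: sc_zvec_iff)
qed

lemma Bf_self_real: "v \<in> Hsp \<Longrightarrow> Im (Bf v v) = 0"
  using Bf_cnj[of v v] by (metis cnj.simps(2) neg_equal_zero)

lemma hdist_cline:
  assumes "v \<in> Hsp" "w \<in> Hsp" "v \<noteq> zvec" "w \<noteq> zvec"
  shows "hdist (cline v) (cline w) = arcosh (cmod (Bf v w) / sqrt (Re (Bf v v) * Re (Bf w w)))"
proof -
  obtain s where s: "s \<noteq> 0" "rep (cline v) = sc s v" using rep_cline[OF assms(3)] by blast
  obtain r where r: "r \<noteq> 0" "rep (cline w) = sc r w" using rep_cline[OF assms(4)] by blast
  have e1: "Bf (sc s v) (sc r w) = s * cnj r * Bf v w"
    using assms by (simp add: Bf_sc_left Bf_sc_right sc_H)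
  have e2: "Re (Bf (sc s v) (sc s v)) = (cmod s)^2 * Re (Bf v v)"
  proof -
    have "Bf (sc s v) (sc s v) = (s * cnj s) * Bf v v"
      using assms by (simp add: Bf_sc_left Bf_sc_right sc_H mult.assoc)
    also have "s * cnj s = of_real ((cmod s)^2)" by (simp only: complex_norm_square)
    finally show ?thesis by simp
  qed
  have e3: "Re (Bf (sc r w) (sc r w)) = (cmod r)^2 * Re (Bf w w)"
  proof -
    have "Bf (sc r w) (sc r w) = (r * cnj r) * Bf w w"
      using assms by (simp add: Bf_sc_left Bf_sc_right sc_H mult.assoc)
    also have "r * cnj r = of_real ((cmod r)^2)" by (simp only: complex_norm_square)
    finally show ?thesis by simp
  qed
  have "sqrt ((cmod s)^2 * Re (Bf v v) * ((cmod r)^2 * Re (Bf w w))) = cmod s * cmod r * sqrt (Re (Bf v v) * Re (Bf w w))"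
    by (simp add: real_sqrt_mult mult_ac)
  moreover have "cmod (s * cnj r * Bf v w) = cmod s * cmod r * cmod (Bf v w)" by (simp add: norm_mult)
  ultimately show ?thesis
    unfolding hdist_def s(2) r(2) e1 e2 e3 using s(1) r(1) by simp
qed




lemma indep_vec:
  assumes "x \<noteq> zvec" "\<not> (\<exists>k. y = sc k x)" "\<And>n. \<alpha> * x n + \<beta> * y n = 0"
  shows "\<alpha> = 0 \<and> \<beta> = 0"
proof -
  have b: "\<beta> = 0"
  proof (rule ccontr)
    assume "\<beta> \<noteq> 0"
    hence "y = sc (- \<alpha> / \<beta>) x"
      using assms(3) by (auto simp: sc_def fun_eq_iff field_simps add_eq_0_iff2)
    thus False using assms(2) by blast
  qed
  obtain n where "x n \<noteq> 0" using assms(1) by (auto simp: zvec_def fun_eq_iff)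
  with assms(3)[of n] b show ?thesis by simp
qed

definition e0 :: hvec where "e0 = (\<lambda>n. if n = 0 then 1 else 0)"

lemma e0_H: "e0 \<in> Hsp"
proof -
  have "(\<lambda>n. (cmod (e0 n))^2) = (\<lambda>n. if n = 0 then 1 else 0)" by (auto simp: e0_def)
  moreover have "summable (\<lambda>n::nat. if n = 0 then (1::real) else 0)"
    using sums_single[of 0 "\<lambda>_. (1::real)"] by (simp add: sums_summable)
  ultimately show ?thesis unfolding Hsp_iff by simp
qed

lemma e0_nz: "e0 \<noteq> zvec" by (auto simp: e0_def zvec_def fun_eq_iff)

lemma Bf_e0_left: "Bf e0 u = cnj (u 0)" by (simp add: Bf_def e0_def)
lemma Bf_e0_right: "Bf u e0 = u 0" by (simp add: Bf_def e0_def)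

lemma UB_nz: "T \<in> UB \<Longrightarrow> v \<in> Hsp \<Longrightarrow> v \<noteq> zvec \<Longrightarrow> T v \<noteq> zvec"
  using UB_zvec UB_inj zvec_H by (metis inj_on_def)

lemma pos_small:
  fixes \<epsilon> M r q :: real
  assumes "M = \<bar>r\<bar> + \<bar>q\<bar> + 1" "0 < \<epsilon>" "\<epsilon> \<le> 1 / (4 * M)"
  shows "1 + 2 * \<epsilon> * r + \<epsilon>^2 * q > 0"
proof -
  have M: "M \<ge> 1" using assms(1) by simp
  have eM: "\<epsilon> * M \<le> 1/4" using assms M by (simp add: field_simps)
  have "\<bar>2 * \<epsilon> * r\<bar> \<le> 2 * (\<epsilon> * M)" using assms(1,2) by (simp add: abs_mult)
  also have "\<dots> \<le> 1/2" using eM by simp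
  finally have 1: "\<bar>2 * \<epsilon> * r\<bar> \<le> 1/2" .
  have "\<epsilon> * 1 \<le> \<epsilon> * M" using mult_left_mono[OF M, of \<epsilon>] assms(2) by simp
  hence "\<epsilon> \<le> 1/4" using eM by simp
  have m0: "0 \<le> \<epsilon> * M" using M assms(2) by simp
  have p1: "\<bar>\<epsilon>^2 * q\<bar> = \<epsilon> * (\<epsilon> * \<bar>q\<bar>)" using assms(2) by (simp add: abs_mult power2_eq_square)
  have p2: "\<epsilon> * (\<epsilon> * \<bar>q\<bar>) \<le> \<epsilon> * (\<epsilon> * M)" using assms by (intro mult_left_mono) (auto simp: abs_le_iff)
  have p3: "\<epsilon> * (\<epsilon> * M) \<le> (1/4) * (1/4)" using eM \<open>\<epsilon> \<le> 1/4\<close> assms(2) m0 by (intro mult_mono) auto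
  have "\<bar>\<epsilon>^2 * q\<bar> \<le> (1/4) * (1/4)" using p1 p2 p3 by linarith
  hence 2: "\<bar>\<epsilon>^2 * q\<bar> \<le> 1/16" by simp
  show ?thesis using 1 2 by linarith
qed

lemma Bf_pert:
  assumes "u \<in> Hsp"
  shows "Re (Bf (vadd e0 (sc (of_real \<epsilon>) u)) (vadd e0 (sc (of_real \<epsilon>) u))) = 1 + 2 * \<epsilon> * Re (u 0) + \<epsilon>^2 * Re (Bf u u)"
proof -
  have H: "sc (of_real \<epsilon>) u \<in> Hsp" using sc_H[OF assms] .
  have "Bf (vadd e0 (sc (of_real \<epsilon>) u)) (vadd e0 (sc (of_real \<epsilon>) u))
      = Bf e0 e0 + Bf e0 (sc (of_real \<epsilon>) u) + (Bf (sc (of_real \<epsilon>) u) e0 + Bf (sc (of_real \<epsilon>) u) (sc (of_real \<epsilon>) u))"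
    using H e0_H by (simp add: Bf_add_left Bf_add_right vadd_H)
  also have "\<dots> = 1 + of_real \<epsilon> * cnj (u 0) + of_real \<epsilon> * u 0 + of_real \<epsilon> * of_real \<epsilon> * Bf u u"
    using assms e0_H by (simp add: Bf_sc_left Bf_sc_right Bf_e0_left Bf_e0_right sc_H) (simp add: sc_def e0_def mult.assoc)
  finally show ?thesis by (simp add: power2_eq_square)
qed

lemma lift_unique:
  assumes U: "U \<in> UB" and V: "V \<in> UB" and eq: "\<forall>x\<in>hyp_pts. U ` x = V ` x"
  shows "\<exists>s. \<forall>u\<in>Hsp. U u = sc s (V u)"
proof -
  have pos: "\<exists>a. U v = sc a (V v)" if "v \<in> Hsp" "Re (Bf v v) > 0" for v
  proof -
    have "cline v \<in> hyp_pts" using hyp_ptsI that by blast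
    hence "cline (U v) = cline (V v)" using eq cline_img[OF U that(1)] cline_img[OF V that(1)] by simp
    thus ?thesis by (rule cline_eqD)
  qed
  have "Re (Bf e0 e0) > 0" unfolding Bf_e0_left by (simp add: e0_def)
  then obtain s where s: "U e0 = sc s (V e0)" using pos e0_H by blast
  have Ve0: "V e0 \<noteq> zvec" using UB_nz[OF V e0_H e0_nz] .
  have "U u = sc s (V u)" if u: "u \<in> Hsp" for u
  proof (cases "\<exists>k. u = sc k e0")
    case True
    then obtain k where k: "u = sc k e0" by blast
    have "U u = sc k (U e0)" using k UB_sc[OF U e0_H] by simp
    also have "\<dots> = sc s (sc k (V e0))" using s by (simp add: sc_sc mult.commute)
    also have "\<dots> = sc s (V u)" using k UB_sc[OF V e0_H] by simp
    finally show ?thesis .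
  next
    case False
    have ind: "\<not> (\<exists>k. V u = sc k (V e0))"
    proof
      assume "\<exists>k. V u = sc k (V e0)"
      then obtain k where "V u = sc k (V e0)" by blast
      hence "V u = V (sc k e0)" using UB_sc[OF V e0_H] by simp
      hence "u = sc k e0" using UB_inj[OF V] u sc_H[OF e0_H] by (auto dest: inj_onD)
      thus False using False by blast
    qed
    define M where "M = \<bar>Re (u 0)\<bar> + \<bar>Re (Bf u u)\<bar> + 1"
    have M1: "M \<ge> 1" unfolding M_def by simp
    have step: "\<exists>a. \<forall>n. s * V e0 n + of_real \<epsilon> * U u n = a * V e0 n + a * of_real \<epsilon> * V u n"
      if e: "0 < \<epsilon>" "\<epsilon> \<le> 1 / (4 * M)" for \<epsilon>
    proof -
      let ?w = "vadd e0 (sc (of_real \<epsilon>) u)"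
      have wH: "?w \<in> Hsp" using vadd_H[OF e0_H sc_H[OF u]] .
      have "Re (Bf ?w ?w) > 0"
        unfolding Bf_pert[OF u] using pos_small[OF M_def e] .
      then obtain a where a: "U ?w = sc a (V ?w)" using pos wH by blast
      have "U ?w = vadd (sc s (V e0)) (sc (of_real \<epsilon>) (U u))"
        using UB_add[OF U e0_H sc_H[OF u]] UB_sc[OF U u] s by simp
      moreover have "V ?w = vadd (V e0) (sc (of_real \<epsilon>) (V u))"
        using UB_add[OF V e0_H sc_H[OF u]] UB_sc[OF V u] by simp
      ultimately have "vadd (sc s (V e0)) (sc (of_real \<epsilon>) (U u)) = sc a (vadd (V e0) (sc (of_real \<epsilon>) (V u)))"
        using a by simp
      hence "\<forall>n. s * V e0 n + of_real \<epsilon> * U u n = a * V e0 n + a * of_real \<epsilon> * V u n"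
        by (simp add: fun_eq_iff vadd_def sc_def algebra_simps)
      thus ?thesis by blast
    qed
    define e1 where "e1 = 1 / (4 * M)"
    define e2 where "e2 = 1 / (8 * M)"
    have e1p: "0 < e1" "e1 \<le> 1 / (4 * M)" using M1 by (auto simp: e1_def)
    have e2p: "0 < e2" "e2 \<le> 1 / (4 * M)" using M1 by (auto simp: e2_def field_simps)
    have e12: "e1 \<noteq> e2" using M1 by (simp add: e1_def e2_def field_simps)
    obtain a1 where a1: "\<And>n. s * V e0 n + of_real e1 * U u n = a1 * V e0 n + a1 * of_real e1 * V u n"
      using step[OF e1p] by blast
    obtain a2 where a2: "\<And>n. s * V e0 n + of_real e2 * U u n = a2 * V e0 n + a2 * of_real e2 * V u n"
      using step[OF e2p] by blast
    have comb: "(of_real e2 * (s - a1) - of_real e1 * (s - a2)) * V e0 n + (of_real e1 * of_real e2 * (a2 - a1)) * V u n = 0" for n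
    proof -
      have "(of_real e2 * (s - a1) - of_real e1 * (s - a2)) * V e0 n + (of_real e1 * of_real e2 * (a2 - a1)) * V u n
         = of_real e2 * ((s * V e0 n + of_real e1 * U u n) - (a1 * V e0 n + a1 * of_real e1 * V u n))
         - of_real e1 * ((s * V e0 n + of_real e2 * U u n) - (a2 * V e0 n + a2 * of_real e2 * V u n))"
        by (simp add: algebra_simps)
      also have "\<dots> = 0" using a1[of n] a2[of n] by simp
      finally show ?thesis .
    qed
    from indep_vec[OF Ve0 ind comb]
    have c1: "of_real e2 * (s - a1) - of_real e1 * (s - a2) = 0" and c2: "of_real e1 * of_real e2 * (a2 - a1) = (0::complex)"
      by auto
    have "a2 = a1" using c2 e1p e2p by simp
    hence "(of_real e2 - of_real e1) * (s - a1) = 0" using c1 by (simp add: algebra_simps)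
    hence sa: "a1 = s" using e12 by simp
    have "U u n = s * V u n" for n
    proof -
      have "of_real e1 * U u n = of_real e1 * (s * V u n)" using a1[of n] sa by (simp add: algebra_simps)
      thus ?thesis using e1p by simp
    qed
    thus ?thesis by (simp add: sc_def fun_eq_iff)
  qed
  thus ?thesis by blast
qed




lemma s2: "complex_of_real (sqrt 2) * complex_of_real (sqrt 2) = 2"
  by (simp flip: of_real_mult)
lemma s2': "complex_of_real (sqrt 2) * (complex_of_real (sqrt 2) * x) = 2 * x"
  by (simp add: mult.assoc[symmetric] s2)

lemma Pxi_sq: "Pxi ** Pxi = mat 1"
proof -
  have h: "complex_of_real (1 / sqrt 2) * complex_of_real (1 / sqrt 2) = 1/2"
    by (simp flip: of_real_mult)
  show ?thesis
    by (simp add: vec_eq_iff forall_2 matrix_matrix_mult_def sum_2 Pxi_def mat_def h s2 s2' field_simps)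
qed

lemma matrix_inv_Pxi: "matrix_inv Pxi = Pxi"
proof -
  have ex: "\<exists>A'. Pxi ** A' = mat 1 \<and> A' ** Pxi = mat 1" using Pxi_sq by blast
  define A' where "A' = matrix_inv Pxi"
  have A': "Pxi ** A' = mat 1 \<and> A' ** Pxi = mat 1"
    unfolding A'_def matrix_inv_def by (rule someI_ex[OF ex])
  have "A' = A' ** (Pxi ** Pxi)" by (simp add: Pxi_sq)
  also have "\<dots> = (A' ** Pxi) ** Pxi" by (simp add: matrix_mul_assoc)
  also have "\<dots> = Pxi" using A' by simp
  finally show ?thesis unfolding A'_def .
qed

lemma Mlb_mult:
  assumes "l \<noteq> 0" "l' \<noteq> 0"
  shows "Mlb l b ** Mlb l' b' = Mlb (l * l') (l * b' + b / l')"
  using assms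
  by (simp add: vec_eq_iff forall_2 matrix_matrix_mult_def sum_2 Mlb_def field_simps)

lemma gmat_mult:
  assumes "l \<noteq> 0" "l' \<noteq> 0"
  shows "gmat l b ** gmat l' b' = gmat (l * l') (l * b' + b / l')"
proof -
  have "gmat l b ** gmat l' b' = Pxi ** Mlb l b ** (Pxi ** Pxi) ** Mlb l' b' ** Pxi"
    unfolding gmat_def matrix_inv_Pxi by (simp add: matrix_mul_assoc)
  also have "\<dots> = Pxi ** (Mlb l b ** Mlb l' b') ** Pxi"
    by (simp add: Pxi_sq matrix_mul_assoc)
  finally show ?thesis unfolding gmat_def matrix_inv_Pxi Mlb_mult[OF assms] .
qed

definition Gm :: "complex \<Rightarrow> complex \<Rightarrow> complex^2^2" where
  "Gm a c = (\<chi> i j. if i = 1 \<and> j = 1 then a else if i = 1 \<and> j = 2 then c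
                    else if i = 2 \<and> j = 1 then cnj c else cnj a)"

lemma gmat_Gm:
  assumes "l \<noteq> 0"
  shows "gmat l b = Gm ((of_real l + of_real (1/l) + \<i> * of_real b) / 2) ((of_real l - of_real (1/l) - \<i> * of_real b) / 2)"
proof -
  have h: "complex_of_real (1 / sqrt 2) * complex_of_real (1 / sqrt 2) = 1/2"
    by (simp flip: of_real_mult)
  show ?thesis unfolding gmat_def matrix_inv_Pxi
    by (simp add: vec_eq_iff forall_2 matrix_matrix_mult_def sum_2 Pxi_def Mlb_def Gm_def algebra_simps h)
       (simp add: field_simps h s2 s2')
qed

lemma Gm_SU11:
  assumes "a * cnj a - c * cnj c = 1"
  shows "Gm a c \<in> SU11"
proof -
  have "det (Gm a c) = 1" using assms by (simp add: det_2 Gm_def mult.commute)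
  moreover have "B2 (Gm a c *v z) (Gm a c *v w) = B2 z w" for z w
  proof -
    have "B2 (Gm a c *v z) (Gm a c *v w) = (z$1 * cnj (w$1) - z$2 * cnj (w$2)) * (a * cnj a - c * cnj c)"
      by (simp add: B2_def matrix_vector_mult_def sum_2 Gm_def algebra_simps)
    thus ?thesis using assms by (simp add: B2_def)
  qed
  ultimately show ?thesis unfolding SU11_def by blast
qed

lemma gmat_SU11:
  assumes "l \<noteq> 0"
  shows "gmat l b \<in> SU11"
proof -
  let ?a = "(of_real l + of_real (1/l) + \<i> * of_real b) / 2 :: complex"
  let ?c = "(of_real l - of_real (1/l) - \<i> * of_real b) / 2 :: complex"
  have "?a * cnj ?a - ?c * cnj ?c = 1"
    using assms by (simp add: complex_eq_iff field_simps power2_eq_square)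
  thus ?thesis using gmat_Gm[OF assms] Gm_SU11 by simp
qed

lemma gmat_norm: "norm (gmat 1 b - gmat 1 0) = \<bar>b\<bar>"
proof -
  have "gmat 1 b - gmat 1 0 = (\<chi> i j. if j = 1 then \<i> * of_real b / 2 else - \<i> * of_real b / 2)"
    unfolding gmat_Gm[of 1, simplified]
    by (simp add: vec_eq_iff forall_2 Gm_def field_simps)
  moreover have "norm ((\<chi> i j. if j = 1 then \<i> * of_real b / 2 else - \<i> * of_real b / 2) :: complex^2^2) = \<bar>b\<bar>"
    by (simp add: norm_vec_def L2_set_def sum_2 norm_mult power2_eq_square real_sqrt_mult flip: real_sqrt_mult)
  ultimately show ?thesis by simp
qed




lemma Bf_expand2:
  assumes "x \<in> Hsp" "y \<in> Hsp"
  shows "Bf (vadd (sc a x) (sc b y)) (vadd (sc a x) (sc b y))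
       = a * cnj a * Bf x x + a * cnj b * Bf x y + b * cnj a * Bf y x + b * cnj b * Bf y y"
  using assms by (simp add: Bf_add_left Bf_add_right Bf_sc_left Bf_sc_right sc_H vadd_H algebra_simps)

lemma neg_on_perp:
  assumes v: "v \<in> Hsp" and c: "c \<in> Hsp" and vp: "Re (Bf v v) > 0" and cv: "Bf c v = 0"
  shows "Re (Bf c c) \<le> 0"
proof (rule ccontr)
  assume "\<not> Re (Bf c c) \<le> 0"
  hence cp: "Re (Bf c c) > 0" by simp
  have v0: "v 0 \<noteq> 0"
  proof
    assume "v 0 = 0"
    hence "Re (Bf v v) \<le> 0" using Re_Bf_self_le[OF v] by simp
    thus False using vp by simp
  qed
  let ?w = "vadd (sc (v 0) c) (sc (- c 0) v)"
  have wH: "?w \<in> Hsp" using vadd_H[OF sc_H[OF c] sc_H[OF v]] .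
  have w0: "?w 0 = 0" by (simp add: vadd_def sc_def)
  have vc: "Bf v c = 0" using Bf_cnj[OF c v] cv by simp
  have "Bf ?w ?w = v 0 * cnj (v 0) * Bf c c + (- c 0) * cnj (- c 0) * Bf v v"
    using Bf_expand2[OF c v, of "v 0" "- c 0"] cv vc by simp
  also have "\<dots> = of_real ((cmod (v 0))^2) * Bf c c + of_real ((cmod (c 0))^2) * Bf v v"
    by (simp only: complex_norm_square) simp
  finally have "Re (Bf ?w ?w) = (cmod (v 0))^2 * Re (Bf c c) + (cmod (c 0))^2 * Re (Bf v v)" by simp
  moreover have "(cmod (v 0))^2 * Re (Bf c c) > 0" using v0 cp by simp
  moreover have "(cmod (c 0))^2 * Re (Bf v v) \<ge> 0" using vp by simp
  ultimately have "Re (Bf ?w ?w) > 0" by linarith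
  moreover have "Re (Bf ?w ?w) \<le> 0" using Re_Bf_self_le[OF wH w0] .
  ultimately show False by simp
qed

lemma img_hyp:
  assumes "U \<in> UB" "x \<in> hyp_pts"
  shows "U ` x \<in> hyp_pts"
proof -
  obtain v where v: "x = cline v" "v \<in> Hsp" "Re (Bf v v) > 0" using hyp_pts_E[OF assms(2)] by blast
  have "U ` x = cline (U v)" using cline_img[OF assms(1) v(2)] v(1) by simp
  moreover have "U v \<in> Hsp" using UB_H[OF assms(1) v(2)] .
  moreover have "Re (Bf (U v) (U v)) > 0" using UB_B[OF assms(1) v(2) v(2)] v(3) by simp
  ultimately show ?thesis using hyp_ptsI by simp
qed

lemma comp_lift:
  assumes rep: "is_rep \<rho>" and g: "g \<in> SU11" and h: "h \<in> SU11"
    and U: "U \<in> UB" "induces U (\<rho> g)" and V: "V \<in> UB" "induces V (\<rho> h)"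
  shows "induces (U \<circ> V) (\<rho> (g ** h))"
  unfolding induces_def
proof
  fix x assume x: "x \<in> hyp_pts"
  have m: "\<forall>g\<in>SU11. \<forall>h\<in>SU11. \<forall>x\<in>hyp_pts. \<rho> (g ** h) x = \<rho> g (\<rho> h x)"
    using rep unfolding is_rep_def by (elim conjE)
  have "\<rho> (g ** h) x = \<rho> g (\<rho> h x)" using m g h x by blast
  also have "\<rho> h x = V ` x" using V(2) x unfolding induces_def by blast
  also have "\<rho> g (V ` x) = U ` (V ` x)" using U(2) img_hyp[OF V(1) x] unfolding induces_def by blast
  finally show "\<rho> (g ** h) x = (U \<circ> V) ` x" by (simp add: image_comp)
qed

lemma induces_same:
  assumes "induces U f" "induces V f"
  shows "\<forall>x\<in>hyp_pts. U ` x = V ` x"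
  using assms unfolding induces_def by auto




locale Sett =
  fixes \<rho> :: "complex^2^2 \<Rightarrow> hvec set \<Rightarrow> hvec set"
    and t :: real
    and \<eta>1 \<eta>2 :: hvec
    and T :: "real \<Rightarrow> hvec \<Rightarrow> hvec"
    and K :: "real \<Rightarrow> complex"
    and c :: "real \<Rightarrow> hvec"
  assumes rep: "is_rep \<rho>"
    and ell: "ell_is \<rho> t"
    and eta1_H: "\<eta>1 \<in> Hsp" and eta1_nz: "\<eta>1 \<noteq> zvec" and eta1_iso: "Bf \<eta>1 \<eta>1 = 0"
    and eta2_H: "\<eta>2 \<in> Hsp" and eta2_nz: "\<eta>2 \<noteq> zvec" and eta2_iso: "Bf \<eta>2 \<eta>2 = 0"
    and eta12: "Bf \<eta>1 \<eta>2 = 1"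
    and eta1_fix: "\<forall>l b. l \<noteq> 0 \<longrightarrow> fixes_bd (\<rho> (gmat l b)) (cline \<eta>1)"
    and eta2_axis: "\<forall>l>0. l \<noteq> 1 \<longrightarrow> is_axis (geod \<eta>1 \<eta>2) (\<rho> (gmat l 0))"
    and T_lift: "\<forall>b. T b \<in> UB \<and> induces (T b) (\<rho> (gmat 1 b)) \<and> T b \<eta>1 = \<eta>1"
    and T_eta2: "\<forall>b. T b \<eta>2 = vadd (vadd (sc (K b) \<eta>1) \<eta>2) (c b) \<and> c b \<in> Eperp \<eta>1 \<eta>2"
begin

lemma eta21: "Bf \<eta>2 \<eta>1 = 1" using Bf_cnj[OF eta1_H eta2_H] eta12 by simp

lemma TUB: "T b \<in> UB" using T_lift by blast
lemma Tind: "induces (T b) (\<rho> (gmat 1 b))" using T_lift by blast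
lemma Teta1: "T b \<eta>1 = \<eta>1" using T_lift by blast
lemma Teta2: "T b \<eta>2 = vadd (vadd (sc (K b) \<eta>1) \<eta>2) (c b)" using T_eta2 by blast
lemma cH: "c b \<in> Hsp" using T_eta2 unfolding Eperp_def by blast
lemma c1: "Bf (c b) \<eta>1 = 0" using T_eta2 unfolding Eperp_def by blast
lemma c2: "Bf (c b) \<eta>2 = 0" using T_eta2 unfolding Eperp_def by blast
lemma c1': "Bf \<eta>1 (c b) = 0" using Bf_cnj[OF cH eta1_H, of b] c1[of b] by simp
lemma c2': "Bf \<eta>2 (c b) = 0" using Bf_cnj[OF cH eta2_H, of b] c2[of b] by simp

lemma form_H: "e \<in> Hsp \<Longrightarrow> vadd (vadd (sc k \<eta>1) \<eta>2) e \<in> Hsp"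
  by (intro vadd_H sc_H eta1_H eta2_H)

lemma form_eta2:
  assumes "e \<in> Hsp" "Bf e \<eta>2 = 0"
  shows "Bf (vadd (vadd (sc k \<eta>1) \<eta>2) e) \<eta>2 = k"
  using assms by (simp add: Bf_add_left Bf_sc_left sc_H vadd_H eta1_H eta2_H eta12 eta2_iso)

lemma form_iso:
  assumes "e \<in> Hsp" "Bf e \<eta>2 = 0" "Bf e \<eta>1 = 0"
  shows "Bf (vadd (vadd (sc k \<eta>1) \<eta>2) e) (vadd (vadd (sc k \<eta>1) \<eta>2) e) = k + cnj k + Bf e e"
proof -
  have a: "Bf \<eta>1 e = 0" "Bf \<eta>2 e = 0" using Bf_cnj[OF assms(1) eta1_H] Bf_cnj[OF assms(1) eta2_H] assms(2,3) by simp_all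
  show ?thesis
    using assms a by (simp add: Bf_add_left Bf_add_right Bf_sc_left Bf_sc_right sc_H vadd_H eta1_H eta2_H
        eta12 eta21 eta1_iso eta2_iso)
qed

lemma T_comp: assumes u: "u \<in> Hsp" shows "T b (T d u) = T (b + d) u"
proof -
  have gm: "gmat 1 b ** gmat 1 d = gmat 1 (b + d)" using gmat_mult[of 1 1 b d] by (simp add: add.commute)
  have ind: "induces (T b \<circ> T d) (\<rho> (gmat 1 (b + d)))"
    using comp_lift[OF rep gmat_SU11 gmat_SU11 TUB[of b] Tind[of b] TUB[of d] Tind[of d]] gm by simp
  obtain s where s: "\<forall>u\<in>Hsp. T (b + d) u = sc s ((T b \<circ> T d) u)"
    using lift_unique[OF TUB UB_comp[OF TUB TUB] induces_same[OF Tind ind]] by blast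
  have "T (b + d) \<eta>1 = sc s (T b (T d \<eta>1))" using s eta1_H by simp
  hence "sc 1 \<eta>1 = sc s \<eta>1" by (simp add: Teta1 sc_one)
  hence "s = 1" using sc_cancel eta1_nz by metis
  thus ?thesis using s u by (simp add: sc_one)
qed

lemma T0: assumes u: "u \<in> Hsp" shows "T 0 u = u"
proof -
  have "T 0 (T 0 u) = T 0 u" using T_comp[OF u, of 0 0] by simp
  thus ?thesis using UB_inj[OF TUB] UB_H[OF TUB u] u by (auto dest: inj_onD)
qed

lemma TK: "Bf (T b \<eta>2) \<eta>2 = K b"
  unfolding Teta2 using form_eta2[OF cH c2] .

lemma K0: "K 0 = 0"
  using TK[of 0] T0[OF eta2_H] eta2_iso by simp

lemma form3: "K (b + d) = K b + K d + Bf (c d) (c (- b))"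
proof -
  have "T (b + d) \<eta>2 = T b (T d \<eta>2)" using T_comp[OF eta2_H] by simp
  also have "\<dots> = vadd (vadd (sc (K d) \<eta>1) (T b \<eta>2)) (T b (c d))"
    unfolding Teta2[of d]
    by (simp add: UB_add[OF TUB] UB_sc[OF TUB] sc_H vadd_H eta1_H eta2_H cH Teta1)
  finally have e: "T (b + d) \<eta>2 = vadd (vadd (sc (K d) \<eta>1) (T b \<eta>2)) (T b (c d))" .
  have bb: "T b (T (- b) \<eta>2) = \<eta>2" using T_comp[OF eta2_H, of b "- b"] T0[OF eta2_H] by simp
  have "Bf (T b (c d)) \<eta>2 = Bf (T b (c d)) (T b (T (- b) \<eta>2))" using bb by simp
  also have "\<dots> = Bf (c d) (T (- b) \<eta>2)" using UB_B[OF TUB cH UB_H[OF TUB eta2_H]] .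
  also have "\<dots> = Bf (c d) (c (- b))" unfolding Teta2
    by (simp add: Bf_add_right Bf_sc_right sc_H vadd_H eta1_H eta2_H cH c1 c2)
  finally have x: "Bf (T b (c d)) \<eta>2 = Bf (c d) (c (- b))" .
  have "K (b + d) = Bf (T (b + d) \<eta>2) \<eta>2" using TK by simp
  also have "\<dots> = K d + K b + Bf (c d) (c (- b))" unfolding e
    by (simp add: Bf_add_left Bf_sc_left sc_H vadd_H eta1_H eta2_H cH UB_H[OF TUB] eta12 TK x)
  finally show ?thesis by simp
qed

lemma iso_K: "K b + cnj (K b) + Bf (c b) (c b) = 0"
proof -
  have "Bf (T b \<eta>2) (T b \<eta>2) = 0" using UB_B[OF TUB eta2_H eta2_H] eta2_iso by simp
  thus ?thesis unfolding Teta2 form_iso[OF cH c2 c1] .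
qed

lemma form2: "K (- b) = cnj (K b)"
proof -
  have "K 0 = K b + K (- b) + Bf (c (- b)) (c (- b))" using form3[of b "- b"] by simp
  hence "K b + K (- b) + Bf (c (- b)) (c (- b)) = 0" using K0 by simp
  moreover have "K (- b) + cnj (K (- b)) + Bf (c (- b)) (c (- b)) = 0" using iso_K .
  ultimately have "K b = cnj (K (- b))" by (metis add_right_cancel add.commute)
  thus ?thesis by simp
qed

lemma ReK: "Re (K b) \<ge> 0"
proof -
  let ?v = "vadd \<eta>1 \<eta>2"
  have vH: "?v \<in> Hsp" using vadd_H[OF eta1_H eta2_H] .
  have vv: "Bf ?v ?v = 2"
    by (simp add: Bf_add_left Bf_add_right vadd_H eta1_H eta2_H eta12 eta21 eta1_iso eta2_iso)
  have cv: "Bf (c b) ?v = 0" by (simp add: Bf_add_right eta1_H eta2_H cH c1 c2)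
  have "Re (Bf (c b) (c b)) \<le> 0" using neg_on_perp[OF vH cH _ cv] vv by simp
  moreover have "Re (K b + cnj (K b) + Bf (c b) (c b)) = 0" using iso_K by simp
  ultimately show ?thesis by simp
qed

end



context Sett begin

lemma v12_H: "vadd \<eta>1 \<eta>2 \<in> Hsp" using vadd_H[OF eta1_H eta2_H] .

lemma v12_B: "Bf (vadd \<eta>1 \<eta>2) (vadd \<eta>1 \<eta>2) = 2"
  by (simp add: Bf_add_left Bf_add_right vadd_H eta1_H eta2_H eta12 eta21 eta1_iso eta2_iso)

lemma v12_nz: "vadd \<eta>1 \<eta>2 \<noteq> zvec"
  using v12_B Bf_zvec_left by force

lemma hdist_Tb: "hdist (cline (T b (vadd \<eta>1 \<eta>2))) (cline (vadd \<eta>1 \<eta>2)) = arcosh (cmod (2 + K b) / 2)"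
proof -
  let ?v = "vadd \<eta>1 \<eta>2"
  have TvH: "T b ?v \<in> Hsp" using UB_H[OF TUB v12_H] .
  have Tv: "T b ?v = vadd \<eta>1 (T b \<eta>2)" using UB_add[OF TUB eta1_H eta2_H] Teta1 by simp
  have a: "Bf (T b \<eta>2) \<eta>1 = 1" using UB_B[OF TUB eta2_H eta1_H, of b] Teta1[of b] eta21 by simp
  have "Bf (T b ?v) ?v = 2 + K b"
    unfolding Tv using a TK[of b]
    by (simp add: Bf_add_left Bf_add_right vadd_H eta1_H eta2_H UB_H[OF TUB] eta12 eta1_iso)
  moreover have "Bf (T b ?v) (T b ?v) = 2" using UB_B[OF TUB v12_H v12_H] v12_B by simp
  moreover have "T b ?v \<noteq> zvec" using UB_nz[OF TUB v12_H v12_nz] .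
  ultimately show ?thesis using hdist_cline[OF TvH v12_H _ v12_nz] v12_B by simp
qed

lemma K_cont:
  assumes "\<epsilon> > 0"
  shows "\<exists>d>0. \<forall>b. \<bar>b\<bar> < d \<longrightarrow> cmod (K b) < \<epsilon>"
proof -
  let ?v = "vadd \<eta>1 \<eta>2"
  let ?x = "cline ?v"
  have xh: "?x \<in> hyp_pts" using hyp_ptsI[OF v12_H] v12_B by simp
  have cont: "\<forall>x\<in>hyp_pts. \<forall>g\<in>SU11. \<forall>e>0. \<exists>d>0. \<forall>h\<in>SU11.
          norm (h - g) < d \<longrightarrow> hdist (\<rho> h x) (\<rho> g x) < e"
    using rep[unfolded is_rep_def, THEN conjunct2, THEN conjunct2, THEN conjunct2] .
  define y where "y = sqrt (1 + \<epsilon>^2 / 4)"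
  have y1: "y > 1" unfolding y_def using assms by simp
  have ey: "4 * y^2 = 4 + \<epsilon>^2" unfolding y_def by (simp add: add_nonneg_nonneg)
  have e0: "arcosh y > 0" using y1 by simp
  obtain d where d: "d > 0" "\<forall>h\<in>SU11. norm (h - gmat 1 0) < d \<longrightarrow> hdist (\<rho> h ?x) (\<rho> (gmat 1 0) ?x) < arcosh y"
  proof -
    have g0: "gmat 1 0 \<in> SU11" by (rule gmat_SU11) simp
    show ?thesis using cont[rule_format, OF xh g0 e0] that by blast
  qed
  have rx: "\<rho> (gmat 1 b) ?x = cline (T b ?v)" for b
    using Tind[of b] xh cline_img[OF TUB v12_H] unfolding induces_def by simp
  have r0: "\<rho> (gmat 1 0) ?x = ?x" using rx[of 0] T0[OF v12_H] by simp
  have "cmod (K b) < \<epsilon>" if b: "\<bar>b\<bar> < d" for b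
  proof -
    have "hdist (\<rho> (gmat 1 b) ?x) (\<rho> (gmat 1 0) ?x) < arcosh y"
    proof -
      have gb: "gmat 1 b \<in> SU11" by (rule gmat_SU11) simp
      show ?thesis using d(2)[rule_format, OF gb] gmat_norm[of b] b by simp
    qed
    hence h: "arcosh (cmod (2 + K b) / 2) < arcosh y" using rx r0 hdist_Tb by simp
    have "cmod (2 + K b) \<ge> Re (2 + K b)" by (rule complex_Re_le_cmod)
    hence z1: "cmod (2 + K b) / 2 \<ge> 1" using ReK[of b] by simp
    have "cmod (2 + K b) / 2 < y" using h z1 y1 by simp
    hence "cmod (2 + K b) < 2 * y" by simp
    hence "(cmod (2 + K b))^2 < (2 * y)^2" using z1 by (intro power_strict_mono) auto
    hence lt: "(cmod (2 + K b))^2 < 4 + \<epsilon>^2" using ey by (simp add: power_mult_distrib)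
    have "(cmod (2 + K b))^2 = (2 + Re (K b))^2 + (Im (K b))^2" by (simp add: cmod_power2)
    also have "\<dots> = 4 + 4 * Re (K b) + ((Re (K b))^2 + (Im (K b))^2)" by (simp add: power2_sum)
    also have "(Re (K b))^2 + (Im (K b))^2 = (cmod (K b))^2" by (simp add: cmod_power2)
    finally have "(cmod (K b))^2 < \<epsilon>^2" using lt ReK[of b] by simp
    thus ?thesis using assms by (simp add: power_less_imp_less_base)
  qed
  thus ?thesis using d(1) by blast
qed

end



lemma affine_pos:
  fixes p q :: complex
  assumes H1: "\<forall>a>0. \<exists>a'>0. p * of_real a + q = of_real a'"
    and H2: "\<forall>a'>0. \<exists>a>0. p * of_real a + q = of_real a'"
  shows "q = 0 \<and> Im p = 0 \<and> Re p > 0"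
proof -
  obtain r1 where r1: "p * of_real 1 + q = of_real r1" using H1[rule_format, of 1] by auto
  obtain r2 where r2: "p * of_real 2 + q = of_real r2" using H1[rule_format, of 2] by auto
  have "p = of_real r2 - of_real r1"
    by (subst r1[symmetric], subst r2[symmetric]) simp
  hence pe: "p = of_real (r2 - r1)" by simp
  have qe: "q = of_real (2 * r1 - r2)" using r1 r2 pe by (simp add: algebra_simps)
  define P where "P = r2 - r1"
  define Q where "Q = 2 * r1 - r2"
  have G1: "\<forall>a>0. P * a + Q > 0"
  proof (intro allI impI)
    fix a :: real assume "a > 0"
    then obtain a' where "a' > 0" "p * of_real a + q = of_real a'" using H1[rule_format, OF \<open>a > 0\<close>] by auto
    hence "of_real (P * a + Q) = (of_real a' :: complex)" using pe qe by (simp add: P_def Q_def)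
    thus "P * a + Q > 0" using \<open>a' > 0\<close> by (simp only: of_real_eq_iff)
  qed
  have G2: "\<exists>a>0. P * a + Q = a'" if a'p: "a' > 0" for a'
  proof -
    obtain a where "a > 0" "p * of_real a + q = of_real a'" using H2[rule_format, OF a'p] by auto
    hence "of_real (P * a + Q) = (of_real a' :: complex)" using pe qe by (simp add: P_def Q_def)
    thus ?thesis using \<open>a > 0\<close> by (simp only: of_real_eq_iff) blast
  qed
  have Pp: "P > 0"
  proof (rule ccontr)
    assume "\<not> P > 0"
    hence "P \<le> 0" by simp
    show False
    proof (cases "P = 0")
      case True
      obtain a where "a > 0" "P * a + Q = 1" using G2[of 1] by auto
      moreover obtain b where "b > 0" "P * b + Q = 2" using G2[of 2] by auto
      ultimately show False using True by simp
    next
      case False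
      hence Pn: "P < 0" using \<open>P \<le> 0\<close> by simp
      define a where "a = (\<bar>Q\<bar> + 1) / (- P)"
      have "a > 0" unfolding a_def using Pn by (intro divide_pos_pos) auto
      moreover have "P * a = - (\<bar>Q\<bar> + 1)" unfolding a_def using Pn by (simp add: field_simps)
      ultimately have "P * a + Q < 0" by (simp add: abs_if split: if_splits)
      thus False using G1 \<open>a > 0\<close> by force
    qed
  qed
  have Q0: "Q = 0"
  proof (rule ccontr)
    assume "Q \<noteq> 0"
    show False
    proof (cases "Q < 0")
      case True
      define a where "a = - Q / P"
      have "a > 0" unfolding a_def using True Pp by (simp add: divide_neg_pos)
      moreover have "P * a + Q = 0" unfolding a_def using Pp by simp
      ultimately show False using G1 by force
    next
      case False
      hence "Q > 0" using \<open>Q \<noteq> 0\<close> by simp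
      then obtain a where "a > 0" "P * a + Q = Q / 2" using G2[of "Q/2"] by auto
      moreover have "P * a > 0" using Pp \<open>a > 0\<close> by simp
      ultimately show False using \<open>Q > 0\<close> by simp
    qed
  qed
  show ?thesis using pe qe Pp Q0 unfolding P_def Q_def by simp
qed




context Sett begin

definition va :: "real \<Rightarrow> hvec" where "va a = vadd (sc (of_real a) \<eta>1) \<eta>2"

lemma va_H: "va a \<in> Hsp" unfolding va_def by (intro vadd_H sc_H eta1_H eta2_H)

lemma va_B: "Bf (va a) (va a) = of_real (2 * a)"
  unfolding va_def by (simp add: Bf_add_left Bf_add_right Bf_sc_left Bf_sc_right sc_H vadd_H eta1_H eta2_H eta12 eta21 eta1_iso eta2_iso)

lemma va_eta1: "Bf (va a) \<eta>1 = 1"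
  unfolding va_def by (simp add: Bf_add_left Bf_sc_left sc_H eta1_H eta2_H eta21 eta1_iso)

lemma va_eta2: "Bf (va a) \<eta>2 = of_real a"
  unfolding va_def by (simp add: Bf_add_left Bf_sc_left sc_H eta1_H eta2_H eta12 eta2_iso)

lemma va_nz: "va a \<noteq> zvec"
  using va_eta1[of a] Bf_zvec_left by force

lemma va_G: "a > 0 \<Longrightarrow> cline (va a) \<in> geod \<eta>1 \<eta>2"
  unfolding geod_def va_def by blast

lemma G_va: "x \<in> geod \<eta>1 \<eta>2 \<Longrightarrow> \<exists>a>0. x = cline (va a)"
  unfolding geod_def va_def by blast

lemma va_hyp: "a > 0 \<Longrightarrow> cline (va a) \<in> hyp_pts"
  using hyp_ptsI[OF va_H] va_B by simp

lemma two_vec_eta1: "x \<in> Hsp \<Longrightarrow> Bf (vadd (sc X \<eta>1) (sc Y \<eta>2)) \<eta>1 = Y"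
  by (simp add: Bf_add_left Bf_sc_left sc_H eta1_H eta2_H eta21 eta1_iso)

lemma two_vec_eta2: "Bf (vadd (sc X \<eta>1) (sc Y \<eta>2)) \<eta>2 = X"
  by (simp add: Bf_add_left Bf_sc_left sc_H eta1_H eta2_H eta12 eta2_iso)

lemma two_vec_eta1': "Bf (vadd (sc X \<eta>1) (sc Y \<eta>2)) \<eta>1 = Y"
  by (simp add: Bf_add_left Bf_sc_left sc_H eta1_H eta2_H eta21 eta1_iso)

lemma scaling:
  assumes mu: "\<mu> > 0" "\<mu> \<noteq> 1"
  shows "\<exists>p>0. (p = (\<mu>^2) powr t \<or> p = (\<mu>^2) powr (- t)) \<and> (\<forall>b. K (\<mu>^2 * b) = of_real p * K b)"
proof -
  let ?f = "\<rho> (gmat \<mu> 0)"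
  let ?G = "geod \<eta>1 \<eta>2"
  have "fixes_bd ?f (cline \<eta>1)" using eta1_fix mu by simp
  then obtain A where A: "A \<in> UB" "induces A ?f" "A ` cline \<eta>1 = cline \<eta>1"
    unfolding fixes_bd_def by blast
  have "A \<eta>1 \<in> cline \<eta>1" using A(3) self_in_cline[of \<eta>1] by blast
  then obtain \<alpha> where Aeta1: "A \<eta>1 = sc \<alpha> \<eta>1" unfolding cline_def by blast
  have ax: "is_axis ?G ?f" using eta2_axis mu by simp
  hence axG: "?f ` ?G = ?G" and axd: "\<forall>x\<in>?G. hdist (?f x) x = displ ?f" unfolding is_axis_def by auto
  have dl: "displ ?f = t * \<bar>ln \<mu>\<bar>" using ell mu unfolding ell_is_def by simp
  have tpos: "t > 0" using ell unfolding ell_is_def by simp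
  have fva: "?f (cline (va a)) = cline (A (va a))" if "a > 0" for a
    using A(2) va_hyp[OF that] cline_img[OF A(1) va_H] unfolding induces_def by simp
  have Ava: "A (va a) = vadd (sc (of_real a * \<alpha>) \<eta>1) (A \<eta>2)" for a
    unfolding va_def using UB_add[OF A(1) sc_H[OF eta1_H] eta2_H] UB_sc[OF A(1) eta1_H] Aeta1
    by (simp add: sc_sc)
  have fG: "?f x \<in> ?G" if "x \<in> ?G" for x
  proof -
    have "?f x \<in> ?f ` ?G" using that by (rule imageI)
    thus ?thesis by (simp only: axG)
  qed
  have "?f (cline (va 1)) \<in> ?G" by (rule fG, rule va_G) simp
  hence "cline (A (va 1)) \<in> ?G" using fva[of 1] by simp
  then obtain a1 where a1: "a1 > 0" "cline (A (va 1)) = cline (va a1)"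
    using G_va[OF \<open>cline (A (va 1)) \<in> ?G\<close>] by auto
  obtain s1 where s1: "A (va 1) = sc s1 (va a1)" using cline_eqD[OF a1(2)] by blast
  define \<beta> where "\<beta> = s1 * of_real a1 - \<alpha>"
  define \<gamma> where "\<gamma> = s1"
  have Aeta2: "A \<eta>2 = vadd (sc \<beta> \<eta>1) (sc \<gamma> \<eta>2)"
  proof -
    have "\<And>n. \<alpha> * \<eta>1 n + A \<eta>2 n = s1 * (of_real a1 * \<eta>1 n + \<eta>2 n)"
      using s1 Ava[of 1] by (simp add: va_def fun_eq_iff vadd_def sc_def)
    hence E: "\<And>n. A \<eta>2 n = s1 * (of_real a1 * \<eta>1 n + \<eta>2 n) - \<alpha> * \<eta>1 n"
      by (metis add_diff_cancel_left')
    have "\<And>n. s1 * (of_real a1 * \<eta>1 n + \<eta>2 n) - \<alpha> * \<eta>1 n = \<beta> * \<eta>1 n + \<gamma> * \<eta>2 n"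
      unfolding \<beta>_def \<gamma>_def by (simp add: algebra_simps)
    hence "\<And>n. A \<eta>2 n = \<beta> * \<eta>1 n + \<gamma> * \<eta>2 n" using E by simp
    thus ?thesis by (simp add: fun_eq_iff vadd_def sc_def)
  qed
  have Ava2: "A (va a) = vadd (sc (of_real a * \<alpha> + \<beta>) \<eta>1) (sc \<gamma> \<eta>2)" for a
    using Ava[of a] Aeta2 by (simp add: fun_eq_iff vadd_def sc_def algebra_simps)
  have coef: "of_real a * \<alpha> + \<beta> = \<gamma> * of_real a'" if ceq: "cline (A (va a)) = cline (va a')" for a a'
  proof -
    obtain s where s: "A (va a) = sc s (va a')" using cline_eqD[OF ceq] by blast
    have "\<gamma> = s" using arg_cong[OF s, of "\<lambda>v. Bf v \<eta>1"] unfolding Ava2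
      by (simp add: two_vec_eta1' Bf_sc_left va_H eta1_H va_eta1)
    moreover have "of_real a * \<alpha> + \<beta> = s * of_real a'" using arg_cong[OF s, of "\<lambda>v. Bf v \<eta>2"] unfolding Ava2
      by (simp add: two_vec_eta2 Bf_sc_left va_H eta2_H va_eta2)
    ultimately show ?thesis by simp
  qed
  have acg: "\<alpha> * cnj \<gamma> = 1"
  proof -
    have "Bf (A \<eta>1) (A \<eta>2) = 1" using UB_B[OF A(1) eta1_H eta2_H] eta12 by simp
    thus ?thesis unfolding Aeta1 Aeta2
      by (simp add: Bf_sc_left Bf_add_right Bf_sc_right sc_H eta1_H eta2_H eta12 eta1_iso mult.commute)
  qed
  hence g0: "\<gamma> \<noteq> 0" by auto
  have H1: "\<forall>a>0. \<exists>a'>0. (\<alpha> / \<gamma>) * of_real a + \<beta> / \<gamma> = of_real a'"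
  proof (intro allI impI)
    fix a :: real assume a: "a > 0"
    have "?f (cline (va a)) \<in> ?G" by (rule fG, rule va_G[OF a])
    hence aG: "cline (A (va a)) \<in> ?G" using fva[OF a] by simp
    then obtain a' where a': "a' > 0" "cline (A (va a)) = cline (va a')"
      using G_va[OF aG] by auto
    have "of_real a * \<alpha> + \<beta> = \<gamma> * of_real a'" using coef[OF a'(2)] .
    hence "(\<alpha> / \<gamma>) * of_real a + \<beta> / \<gamma> = of_real a'" using g0 by (simp add: field_simps)
    thus "\<exists>a'>0. (\<alpha> / \<gamma>) * of_real a + \<beta> / \<gamma> = of_real a'" using a'(1) by blast
  qed
  have H2: "\<forall>a'>0. \<exists>a>0. (\<alpha> / \<gamma>) * of_real a + \<beta> / \<gamma> = of_real a'"
  proof (intro allI impI)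
    fix a' :: real assume a': "a' > 0"
    have "cline (va a') \<in> ?f ` ?G" using va_G[OF a'] by (simp only: axG)
    then obtain x where x: "x \<in> ?G" "cline (va a') = ?f x" by blast
    obtain a where a: "a > 0" "x = cline (va a)" using G_va[OF x(1)] by blast
    have "cline (A (va a)) = cline (va a')" using x(2) a fva[OF a(1)] by simp
    hence "of_real a * \<alpha> + \<beta> = \<gamma> * of_real a'" by (rule coef)
    hence "(\<alpha> / \<gamma>) * of_real a + \<beta> / \<gamma> = of_real a'" using g0 by (simp add: field_simps)
    thus "\<exists>a>0. (\<alpha> / \<gamma>) * of_real a + \<beta> / \<gamma> = of_real a'" using a(1) by blast
  qed
  from affine_pos[OF H1 H2] have b0: "\<beta> = 0" and imp: "Im (\<alpha> / \<gamma>) = 0" and rep0: "Re (\<alpha> / \<gamma>) > 0"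
    using g0 by auto
  define pr where "pr = Re (\<alpha> / \<gamma>)"
  have pr0: "pr > 0" using rep0 unfolding pr_def .
  have agp: "\<alpha> / \<gamma> = of_real pr" using imp unfolding pr_def by (simp add: complex_eq_iff)
  hence aeq: "\<alpha> = of_real pr * \<gamma>" using g0 by (simp add: field_simps)
  have Aeta2': "A \<eta>2 = sc \<gamma> \<eta>2" using Aeta2 b0 by (simp add: fun_eq_iff vadd_def sc_def)
  have pg: "pr * (cmod \<gamma>)^2 = 1"
  proof -
    have "of_real pr * (\<gamma> * cnj \<gamma>) = 1" using acg aeq by (simp add: mult.assoc)
    hence "of_real pr * of_real ((cmod \<gamma>)^2) = (1::complex)" by (simp only: complex_norm_square)
    hence "of_real (pr * (cmod \<gamma>)^2) = (1::complex)" by simp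
    thus ?thesis using of_real_eq_1_iff by blast
  qed
  define r where "r = sqrt pr"
  have r0: "r > 0" unfolding r_def using pr0 by simp
  have pr_r: "pr = r^2" unfolding r_def using pr0 by simp
  have cg: "cmod \<gamma> = 1 / r"
  proof -
    have "(cmod \<gamma>)^2 = (1/r)^2" using pg pr_r r0 by (simp add: field_simps power2_eq_square)
    thus ?thesis using r0 by (simp add: power2_eq_iff_nonneg)
  qed
  let ?w = "vadd (sc \<alpha> \<eta>1) (sc \<gamma> \<eta>2)"
  have Av1: "A (va 1) = ?w" using Ava2[of 1] b0 by simp
  have wH: "?w \<in> Hsp" by (intro vadd_H sc_H eta1_H eta2_H)
  have wnz: "?w \<noteq> zvec" using UB_nz[OF A(1) va_H va_nz, of 1] Av1 by simp
  have wv: "Bf ?w (va 1) = \<alpha> + \<gamma>" unfolding va_def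
    by (simp add: Bf_add_left Bf_add_right Bf_sc_left Bf_sc_right sc_H vadd_H eta1_H eta2_H eta12 eta21 eta1_iso eta2_iso)
  have ww: "Bf ?w ?w = \<alpha> * cnj \<gamma> + \<gamma> * cnj \<alpha>"
    by (simp add: Bf_add_left Bf_add_right Bf_sc_left Bf_sc_right sc_H vadd_H eta1_H eta2_H eta12 eta21 eta1_iso eta2_iso)
  have ww2: "Re (Bf ?w ?w) = 2"
  proof -
    have "\<gamma> * cnj \<alpha> = cnj (\<alpha> * cnj \<gamma>)" by simp
    thus ?thesis unfolding ww using acg by simp
  qed
  have "hdist (?f (cline (va 1))) (cline (va 1)) = t * \<bar>ln \<mu>\<bar>" using axd va_G[of 1] dl by simp
  hence "hdist (cline ?w) (cline (va 1)) = t * \<bar>ln \<mu>\<bar>" using fva[of 1] Av1 by simp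
  hence hd: "arcosh (cmod (\<alpha> + \<gamma>) / 2) = t * \<bar>ln \<mu>\<bar>"
    using hdist_cline[OF wH va_H wnz va_nz] wv ww2 va_B[of 1] by simp
  have "cmod (\<alpha> + \<gamma>) = (pr + 1) * cmod \<gamma>"
  proof -
    have "\<alpha> + \<gamma> = of_real (pr + 1) * \<gamma>" using aeq by (simp add: algebra_simps)
    thus ?thesis using pr0 by (simp add: norm_mult)
  qed
  hence "cmod (\<alpha> + \<gamma>) / 2 = (r + inverse r) / 2" using cg pr_r r0 by (simp add: field_simps power2_eq_square)
  also have "\<dots> = cosh (ln r)" using cosh_ln_real[OF r0] by simp
  also have "\<dots> = cosh \<bar>ln r\<bar>" by (simp add: abs_if)
  finally have "arcosh (cosh \<bar>ln r\<bar>) = t * \<bar>ln \<mu>\<bar>" using hd by simp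
  hence lr: "\<bar>ln r\<bar> = t * \<bar>ln \<mu>\<bar>" using arcosh_cosh_real[of "\<bar>ln r\<bar>"] by simp
  have lpr: "ln pr = 2 * ln r" using pr_r r0 by (simp add: ln_realpow)
  have lmu: "ln (\<mu>^2) = 2 * ln \<mu>" using mu by (simp add: ln_realpow)
  have pr_cases: "pr = (\<mu>^2) powr t \<or> pr = (\<mu>^2) powr (- t)"
  proof -
    have "ln pr = t * ln (\<mu>^2) \<or> ln pr = - t * ln (\<mu>^2)"
      using lr lpr lmu tpos by (auto simp: abs_if split: if_splits)
    moreover have "pr = exp (ln pr)" using pr0 by simp
    ultimately show ?thesis using mu by (auto simp: powr_def mult.commute)
  qed
  have Krel: "K (\<mu>^2 * b) = of_real pr * K b" for b
  proof -
    have gm: "gmat 1 (\<mu>^2 * b) ** gmat \<mu> 0 = gmat \<mu> 0 ** gmat 1 b"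
      using gmat_mult[of 1 \<mu> "\<mu>^2 * b" 0] gmat_mult[of \<mu> 1 0 b] mu by (simp add: power2_eq_square)
    have gs: "gmat \<mu> 0 \<in> SU11" "gmat 1 b \<in> SU11" "gmat 1 (\<mu>^2 * b) \<in> SU11"
      using gmat_SU11 mu by auto
    have ind1: "induces (T (\<mu>^2 * b) \<circ> A) (\<rho> (gmat 1 (\<mu>^2 * b) ** gmat \<mu> 0))"
      using comp_lift[OF rep gs(3) gs(1) TUB Tind A(1) A(2)] .
    have ind2: "induces (A \<circ> T b) (\<rho> (gmat 1 (\<mu>^2 * b) ** gmat \<mu> 0))"
      using comp_lift[OF rep gs(1) gs(2) A(1) A(2) TUB Tind] gm by simp
    obtain s where s: "\<forall>u\<in>Hsp. (T (\<mu>^2 * b) \<circ> A) u = sc s ((A \<circ> T b) u)"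
      using lift_unique[OF UB_comp[OF TUB A(1)] UB_comp[OF A(1) TUB] induces_same[OF ind1 ind2]] by blast
    have a0: "\<alpha> \<noteq> 0" using acg by auto
    have "T (\<mu>^2 * b) (A \<eta>1) = sc s (A (T b \<eta>1))" using s eta1_H by simp
    hence "sc \<alpha> \<eta>1 = sc s (sc \<alpha> \<eta>1)" unfolding Aeta1 Teta1 UB_sc[OF TUB eta1_H] by simp
    hence "sc \<alpha> \<eta>1 = sc (s * \<alpha>) \<eta>1" by (simp add: sc_sc)
    hence "\<alpha> = s * \<alpha>" using sc_cancel eta1_nz by blast
    hence s1: "s = 1" using a0 by simp
    have e2: "T (\<mu>^2 * b) (A \<eta>2) = A (T b \<eta>2)" using s eta2_H s1 by (simp add: sc_one)
    have lhs: "Bf (T (\<mu>^2 * b) (A \<eta>2)) \<eta>2 = \<gamma> * K (\<mu>^2 * b)"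
      unfolding Aeta2' UB_sc[OF TUB eta2_H] by (simp add: Bf_sc_left UB_H[OF TUB] eta2_H TK)
    have Ac: "Bf (A (c b)) \<eta>2 = 0"
    proof -
      have "Bf (A (c b)) (A \<eta>2) = 0" using UB_B[OF A(1) cH eta2_H] c2 by simp
      hence "cnj \<gamma> * Bf (A (c b)) \<eta>2 = 0" unfolding Aeta2' by (simp add: Bf_sc_right eta2_H UB_H[OF A(1) cH])
      thus ?thesis using g0 by simp
    qed
    have "A (T b \<eta>2) = vadd (vadd (sc (K b) (A \<eta>1)) (A \<eta>2)) (A (c b))"
      unfolding Teta2 by (simp add: UB_add[OF A(1)] UB_sc[OF A(1)] sc_H vadd_H eta1_H eta2_H cH)
    hence rhs: "Bf (A (T b \<eta>2)) \<eta>2 = K b * \<alpha>"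
      unfolding Aeta1 Aeta2' using Ac
      by (simp add: Bf_add_left Bf_sc_left sc_H vadd_H eta1_H eta2_H UB_H[OF A(1) cH] eta12 eta2_iso)
    have "\<gamma> * K (\<mu>^2 * b) = Bf (T (\<mu>^2 * b) (A \<eta>2)) \<eta>2" using lhs by simp
    also have "\<dots> = Bf (A (T b \<eta>2)) \<eta>2" using e2 by simp
    also have "\<dots> = K b * \<alpha>" using rhs .
    also have "\<dots> = K b * (of_real pr * \<gamma>)" using aeq by simp
    finally have "\<gamma> * K (\<mu>^2 * b) = K b * (of_real pr * \<gamma>)" .
    hence "\<gamma> * K (\<mu>^2 * b) = \<gamma> * (of_real pr * K b)" by (simp add: mult_ac)
    thus ?thesis using g0 by simp
  qed
  show ?thesis using pr0 pr_cases Krel by blast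
qed

end



context Sett begin

lemma tpos: "t > 0" using ell unfolding ell_is_def by simp

lemma Kzero:
  assumes q: "0 < q" "q < 1" and m: "m \<ge> 1" and rel: "\<And>b. K (q * b) = of_real m * K b"
  shows "K b0 = 0"
proof (rule ccontr)
  assume nz: "K b0 \<noteq> 0"
  have pw: "K (q^n * b0) = of_real (m^n) * K b0" for n
  proof (induction n)
    case 0 then show ?case by simp
  next
    case (Suc n)
    have "K (q^Suc n * b0) = K (q * (q^n * b0))" by (simp add: mult.assoc)
    also have "\<dots> = of_real m * K (q^n * b0)" by (rule rel)
    also have "\<dots> = of_real (m^Suc n) * K b0" using Suc by simp
    finally show ?case .
  qed
  have ge: "cmod (K (q^n * b0)) \<ge> cmod (K b0)" for n
  proof -
    have "m^n \<ge> 1" using m by (rule one_le_power)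
    hence "m^n * cmod (K b0) \<ge> 1 * cmod (K b0)" by (intro mult_right_mono) auto
    moreover have "cmod (K (q^n * b0)) = cmod (complex_of_real (m^n)) * cmod (K b0)" by (simp only: pw norm_mult)
    moreover have "cmod (complex_of_real (m^n)) = m^n" using m by (simp only: norm_of_real) simp
    ultimately show ?thesis by simp
  qed
  have "cmod (K b0) > 0" using nz by simp
  then obtain d where d: "d > 0" "\<And>b. \<bar>b\<bar> < d \<Longrightarrow> cmod (K b) < cmod (K b0)"
    using K_cont by blast
  have "d / (\<bar>b0\<bar> + 1) > 0" using d(1) by simp
  then obtain n where n: "q^n < d / (\<bar>b0\<bar> + 1)" using real_arch_pow_inv q(2) by blast
  have "\<bar>q^n * b0\<bar> = q^n * \<bar>b0\<bar>" using q by (simp add: abs_mult)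
  also have "\<dots> \<le> q^n * (\<bar>b0\<bar> + 1)" using q by simp
  also have "\<dots> < d" using n by (simp add: field_simps)
  finally have "cmod (K (q^n * b0)) < cmod (K b0)" by (rule d(2))
  thus False using ge[of n] by simp
qed

lemma form1: "\<forall>l>0. \<forall>b. K (l * b) = of_real (l powr t) * K b"
proof (intro allI impI)
  fix l b :: real assume l: "l > 0"
  show "K (l * b) = of_real (l powr t) * K b"
  proof (cases "l = 1")
    case True thus ?thesis by simp
  next
    case False
    define \<mu> where "\<mu> = sqrt l"
    have mu: "\<mu> > 0" "\<mu> \<noteq> 1" "\<mu>^2 = l" unfolding \<mu>_def using l False by auto
    obtain p where p: "p > 0" "p = l powr t \<or> p = l powr (- t)" "\<And>b. K (l * b) = of_real p * K b"
      using scaling[OF mu(1,2)] mu(3) by auto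
    show ?thesis
    proof (cases "p = l powr t")
      case True thus ?thesis using p(3) by simp
    next
      case False
      hence pe: "p = l powr (- t)" using p(2) by simp
      have lt: "l powr t > 0" using l by simp
      have allz: "K b' = 0" for b'
      proof (cases "l < 1")
        case True
        have "l powr t \<le> 1" using powr_le1[of t l] tpos l True by simp
        hence "inverse (l powr t) \<ge> 1" using lt by (simp add: one_le_inverse)
        hence "p \<ge> 1" using pe by (simp add: powr_minus)
        thus ?thesis using Kzero[OF l True, of p] p(3) by blast
      next
        case False
        hence l1: "l > 1" using \<open>l \<noteq> 1\<close> by simp
        have m1: "l powr t \<ge> 1" using ge_one_powr_ge_zero[of l t] l1 tpos by simp
        have rel: "K (inverse l * b) = of_real (l powr t) * K b" for b
        proof -
          have lb: "l * (inverse l * b) = b" using l by simp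
          have "K b = of_real p * K (inverse l * b)" using p(3)[of "inverse l * b"] unfolding lb .
          hence "of_real (l powr t) * K b = of_real (l powr t * p) * K (inverse l * b)" by simp
          also have "l powr t * p = 1" using pe lt by (simp add: powr_minus)
          finally show ?thesis by simp
        qed
        have "inverse l > 0" "inverse l < 1" using l1 by (auto simp: inverse_less_1_iff)
        thus ?thesis using Kzero[OF _ _ m1 rel] by blast
      qed
      show ?thesis using allz by simp
    qed
  qed
qed

end


theorem mainTheorem13:
  fixes \<rho> :: "complex^2^2 \<Rightarrow> hvec set \<Rightarrow> hvec set"
    and t :: real
    and \<eta>1 \<eta>2 :: hvec
    and T :: "real \<Rightarrow> hvec \<Rightarrow> hvec"
    and K :: "real \<Rightarrow> complex"
    and c :: "real \<Rightarrow> hvec"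
  assumes rep: "is_rep \<rho>"
    and nonel: "non_elementary \<rho>"
    and ell: "ell_is \<rho> t"
    and eta1_H: "\<eta>1 \<in> Hsp" and eta1_nz: "\<eta>1 \<noteq> zvec" and eta1_iso: "Bf \<eta>1 \<eta>1 = 0"
    and eta2_H: "\<eta>2 \<in> Hsp" and eta2_nz: "\<eta>2 \<noteq> zvec" and eta2_iso: "Bf \<eta>2 \<eta>2 = 0"
    and eta12: "Bf \<eta>1 \<eta>2 = 1"
    and eta1_fix: "\<forall>l b. l \<noteq> 0 \<longrightarrow> fixes_bd (\<rho> (gmat l b)) (cline \<eta>1)"
    and eta1_unique: "\<forall>xi\<in>bd_pts. (\<forall>l b. l \<noteq> 0 \<longrightarrow> fixes_bd (\<rho> (gmat l b)) xi)
                        \<longrightarrow> xi = cline \<eta>1"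
    and eta2_axis: "\<forall>l>0. l \<noteq> 1 \<longrightarrow> is_axis (geod \<eta>1 \<eta>2) (\<rho> (gmat l 0))"
    and T_lift: "\<forall>b. T b \<in> UB \<and> induces (T b) (\<rho> (gmat 1 b)) \<and> T b \<eta>1 = \<eta>1"
    and T_eta2: "\<forall>b. T b \<eta>2 = vadd (vadd (sc (K b) \<eta>1) \<eta>2) (c b) \<and> c b \<in> Eperp \<eta>1 \<eta>2"
  shows "(\<forall>l>0. \<forall>b. K (l * b) = of_real (l powr t) * K b)
       \<and> (\<forall>b. K (- b) = cnj (K b))
       \<and> (\<forall>b d. K (b + d) = K b + K d + Bf (c d) (c (- b)))"
proof -
  have S: "Sett \<rho> t \<eta>1 \<eta>2 T K c"
    unfolding Sett_def
    using rep ell eta1_H eta1_nz eta1_iso eta2_H eta2_nz eta2_iso eta12 eta1_fix eta2_axis T_lift T_eta2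
    by (intro conjI)
  show ?thesis using Sett.form1[OF S] Sett.form2[OF S] Sett.form3[OF S] by blast
qed

end
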